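(* Let $n \ge 2$, let $m_1,\dots,m_n>0$ be masses, and let $q_1=(x_1,y_1),\dots,q_n=(x_n,y_n)\in\mathbb{R}^2$ be pairwise distinct points. For $1\le i\neq j\le n$ let $v_{i,j}\in\mathbb{R}^{2n}$ be the twist vector defined in the context. Then the linear subspace of $\mathbb{R}^{2n}$ spanned by $\{v_{i,j} : 1\le i\neq j\le n\}$ has dimension $2n-3$, unless all $n$ points $q_1,\dots,q_n$ lie on a common line, in which case the dimension is $n-1$.
   Context: Configurations are written in flattened coordinates $(x_1,y_1,x_2,y_2,\ldots,x_n,y_n)\in\mathbb{R}^{2n}$. Write $x_{i,j}=x_i-x_j$ and $y_{i,j}=y_i-y_j$. The twist vector $v_{i,j}$ (for $i\neq j$) at the configuration $(q_1,\dots,q_n)$ is the vector in $\mathbb{R}^{2n}$ whose only possibly nonzero components are: the $x_i$-component $m_j y_{i,j}$, the $y_i$-component $-m_j x_{i,j}$, the $x_j$-component $-m_i y_{i,j}$, and the $y_j$-component $m_i x_{i,j}$; all other components are $0$. (It is the infinitesimal rotation of the pair $q_i,q_j$ about their center of mass.) *)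

theory Defs
  imports "HOL-Analysis.Analysis"
begin

text \<open>A configuration of n points in the plane is an element of (real^2)^'n, which
  is R^{2n} with coordinates (x_1,y_1,...,x_n,y_n): component k is the point q_k,
  and its components 1 and 2 are x_k and y_k.\<close>

definition twist :: "('n::finite \<Rightarrow> real) \<Rightarrow> (real^2)^'n \<Rightarrow> 'n \<Rightarrow> 'n \<Rightarrow> (real^2)^'n" where
  "twist m q i j = (\<chi> k.
     if k = i then vector [  m j * (q$i$2 - q$j$2), - m j * (q$i$1 - q$j$1)]
     else if k = j then vector [ - m i * (q$i$2 - q$j$2), m i * (q$i$1 - q$j$1)]
     else 0)"

end

theory Submission
  imports Defs
begin

lemma twist_axis:
  assumes "i \<noteq> j"
  shows "twist m q i j = axis i (vector [m j * (q$i$2 - q$j$2), - m j * (q$i$1 - q$j$1)])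
     + axis j (vector [ - m i * (q$i$2 - q$j$2), m i * (q$i$1 - q$j$1)])"
  using assms unfolding twist_def axis_def by (auto simp: vec_eq_iff)

lemma inner_vec2: "inner (x::real^2) (vector [a,b]) = x$1*a + x$2*b"
  by (simp add: inner_vec_def sum_2)

definition tw_expr :: "('n::finite \<Rightarrow> real) \<Rightarrow> (real^2)^'n \<Rightarrow> (real^2)^'n \<Rightarrow> 'n \<Rightarrow> 'n \<Rightarrow> real" where
  "tw_expr m q u i j = m j * (u$i$1 * (q$i$2 - q$j$2) - u$i$2 * (q$i$1 - q$j$1))
     - m i * (u$j$1 * (q$i$2 - q$j$2) - u$j$2 * (q$i$1 - q$j$1))"

lemma inner_twist:
  assumes "i \<noteq> j"
  shows "inner u (twist m q i j) = tw_expr m q u i j"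
  using assms by (simp add: twist_axis inner_add_right inner_axis inner_vec2 tw_expr_def algebra_simps)

lemma ex_two: assumes "CARD('n::finite) \<ge> 2" shows "\<exists>a b::'n. a \<noteq> b"
  using assms card_le_Suc0_iff_eq[of "UNIV::'n set"] by force

lemma vec2_neq: "(x::real^2) \<noteq> y \<longleftrightarrow> x$1 \<noteq> y$1 \<or> x$2 \<noteq> y$2"
  by (auto simp: vec_eq_iff forall_2)

lemma L0:
  fixes w1 w2 p1 p2 r1 r2 :: real
  assumes "w1*p2 - w2*p1 = 0" "w1*r2 - w2*r1 = 0" "p1*r2 - p2*r1 \<noteq> 0"
  shows "w1 = 0 \<and> w2 = 0"
proof -
  have "w1 * (p1*r2 - p2*r1) = 0" using assms(1,2) by algebra
  moreover have "w2 * (p1*r2 - p2*r1) = 0" using assms(1,2) by algebra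
  ultimately show ?thesis using assms(3) by simp
qed

lemma L1:
  fixes e1 e2 x1 x2 y1 y2 :: real
  assumes "e1 \<noteq> 0 \<or> e2 \<noteq> 0" "e1*x2 - e2*x1 = 0" "e1*y2 - e2*y1 = 0"
  shows "x1*y2 - x2*y1 = 0"
proof -
  have "e1 * (x1*y2 - x2*y1) = 0" using assms(2,3) by algebra
  moreover have "e2 * (x1*y2 - x2*y1) = 0" using assms(2,3) by algebra
  ultimately show ?thesis using assms(1) by auto
qed

lemma rigid:
  fixes X Y A B :: "'n \<Rightarrow> real"
  assumes rel: "\<And>i j. (A i - A j)*(Y i - Y j) - (B i - B j)*(X i - X j) = 0"
  and dist: "\<And>i j. i \<noteq> j \<Longrightarrow> X i \<noteq> X j \<or> Y i \<noteq> Y j"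
  and nc: "(X b - X a)*(Y c - Y a) - (Y b - Y a)*(X c - X a) \<noteq> 0"
  shows "\<exists>s1 s2 w. \<forall>k. A k = s1 - w*X k \<and> B k = s2 - w*Y k"
proof -
  define dx where "dx = X a - X b"
  define dy where "dy = Y a - Y b"
  define N where "N = dx^2 + dy^2"
  have "dx \<noteq> 0 \<or> dy \<noteq> 0" using nc unfolding dx_def dy_def by auto
  hence N: "N \<noteq> 0" unfolding N_def by (simp add: sum_power2_eq_zero_iff)
  define w where "w = - ((A a - A b)*dx + (B a - B b)*dy) / N"
  define s1 where "s1 = A a + w * X a"
  define s2 where "s2 = B a + w * Y a"
  define A' where "A' k = A k - s1 + w * X k" for k
  define B' where "B' k = B k - s2 + w * Y k" for k
  have rel': "(A' i - A' j)*(Y i - Y j) - (B' i - B' j)*(X i - X j) = 0" for i j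
  proof -
    have "(A' i - A' j)*(Y i - Y j) - (B' i - B' j)*(X i - X j)
      = (A i - A j)*(Y i - Y j) - (B i - B j)*(X i - X j)"
      unfolding A'_def B'_def by (simp add: algebra_simps)
    thus ?thesis using rel by simp
  qed
  have r0: "(A a - A b)*dy - (B a - B b)*dx = 0" using rel[of a b] unfolding dx_def dy_def .
  have wdx: "w * dx = - (A a - A b)"
  proof -
    have "w * dx * N = - (A a - A b) * N"
      unfolding w_def using N apply (simp add: field_simps)
      unfolding N_def using r0 by algebra
    thus ?thesis using N by simp
  qed
  have wdy: "w * dy = - (B a - B b)"
  proof -
    have "w * dy * N = - (B a - B b) * N"
      unfolding w_def using N apply (simp add: field_simps)
      unfolding N_def using r0 by algebra
    thus ?thesis using N by simp
  qed
  have za: "A' a = 0 \<and> B' a = 0" unfolding A'_def B'_def s1_def s2_def by simp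
  have zb: "A' b = 0 \<and> B' b = 0"
    unfolding A'_def B'_def s1_def s2_def using wdx wdy unfolding dx_def dy_def
    by (auto simp: algebra_simps)
  have zero_of: "A' k = 0 \<and> B' k = 0"
    if "A' i = 0 \<and> B' i = 0" "A' j = 0 \<and> B' j = 0"
       "(X k - X i)*(Y k - Y j) - (Y k - Y i)*(X k - X j) \<noteq> 0" for i j k
    using L0[of "A' k" "Y k - Y i" "B' k" "X k - X i" "Y k - Y j" "X k - X j"]
      rel'[of k i] rel'[of k j] that by auto
  have zc: "A' c = 0 \<and> B' c = 0"
  proof (rule zero_of[OF za zb])
    show "(X c - X a) * (Y c - Y b) - (Y c - Y a) * (X c - X b) \<noteq> 0"
    proof
      assume h: "(X c - X a) * (Y c - Y b) - (Y c - Y a) * (X c - X b) = 0"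
      have "(X b - X a)*(Y c - Y a) - (Y b - Y a)*(X c - X a) = 
           (X c - X a) * (Y c - Y b) - (Y c - Y a) * (X c - X b)" by algebra
      with h nc show False by simp
    qed
  qed
  have "A' k = 0 \<and> B' k = 0" for k
  proof (cases "k = a")
    case True thus ?thesis using za by simp
  next
    case False
    show ?thesis
    proof (cases "(X k - X a)*(Y k - Y b) - (Y k - Y a)*(X k - X b) = 0")
      case False thus ?thesis using zero_of[OF za zb] by simp
    next
      case h1: True
      have "(X k - X a)*(Y k - Y c) - (Y k - Y a)*(X k - X c) \<noteq> 0"
      proof
        assume h2: "(X k - X a)*(Y k - Y c) - (Y k - Y a)*(X k - X c) = 0"
        have e: "X k - X a \<noteq> 0 \<or> Y k - Y a \<noteq> 0" using dist[OF False] by auto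
        have "(X k - X a)*(Y b - Y a) - (Y k - Y a)*(X b - X a) = 0" using h1 by algebra
        moreover have "(X k - X a)*(Y c - Y a) - (Y k - Y a)*(X c - X a) = 0" using h2 by algebra
        ultimately have "(X b - X a)*(Y c - Y a) - (Y b - Y a)*(X c - X a) = 0"
          using L1[OF e] by blast
        with nc show False by simp
      qed
      thus ?thesis using zero_of[OF za zc] by simp
    qed
  qed
  note allz = this
  have "A k = s1 - w*X k \<and> B k = s2 - w*Y k" for k
    using allz[of k] unfolding A'_def B'_def by linarith
  thus ?thesis by blast
qed

lemma coll_param:
  fixes u1 u2 Ak Bk Aa Ba :: real
  assumes N: "u1^2 + u2^2 \<noteq> 0" and r: "(Ak - Aa)*u2 - (Bk - Ba)*u1 = 0"
  shows "Ak = ((-Aa*u2 + Ba*u1)/(u1^2+u2^2)) * (-u2) + ((Ak*u1 + Bk*u2)/(u1^2+u2^2)) * u1"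
    and "Bk = ((-Aa*u2 + Ba*u1)/(u1^2+u2^2)) * u1 + ((Ak*u1 + Bk*u2)/(u1^2+u2^2)) * u2"
proof -
  have e1: "(-Aa*u2 + Ba*u1) * (-u2) + (Ak*u1 + Bk*u2) * u1 = Ak * (u1^2+u2^2)" using r by algebra
  have "((-Aa*u2 + Ba*u1)/(u1^2+u2^2)) * (-u2) + ((Ak*u1 + Bk*u2)/(u1^2+u2^2)) * u1
     = ((-Aa*u2 + Ba*u1) * (-u2) + (Ak*u1 + Bk*u2) * u1) / (u1^2+u2^2)"
    by (simp only: times_divide_eq_left add_divide_distrib[symmetric])
  also have "\<dots> = Ak" using N by (simp only: e1) (rule nonzero_mult_div_cancel_right)
  finally show "Ak = ((-Aa*u2 + Ba*u1)/(u1^2+u2^2)) * (-u2) + ((Ak*u1 + Bk*u2)/(u1^2+u2^2)) * u1" by simp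
  have e2: "(-Aa*u2 + Ba*u1) * u1 + (Ak*u1 + Bk*u2) * u2 = Bk * (u1^2+u2^2)" using r by algebra
  have "((-Aa*u2 + Ba*u1)/(u1^2+u2^2)) * u1 + ((Ak*u1 + Bk*u2)/(u1^2+u2^2)) * u2
     = ((-Aa*u2 + Ba*u1) * u1 + (Ak*u1 + Bk*u2) * u2) / (u1^2+u2^2)"
    by (simp only: times_divide_eq_left add_divide_distrib[symmetric])
  also have "\<dots> = Bk" using N by (simp only: e2) (rule nonzero_mult_div_cancel_right)
  finally show "Bk = ((-Aa*u2 + Ba*u1)/(u1^2+u2^2)) * u1 + ((Ak*u1 + Bk*u2)/(u1^2+u2^2)) * u2" by simp
qed

lemma par_param:
  fixes u1 u2 z1 z2 :: real
  assumes N: "u1^2 + u2^2 \<noteq> 0" and r: "u1*z2 - u2*z1 = 0"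
  shows "z1 = ((z1*u1+z2*u2)/(u1^2+u2^2)) * u1" "z2 = ((z1*u1+z2*u2)/(u1^2+u2^2)) * u2"
proof -
  have "z1 * (u1^2+u2^2) = (z1*u1+z2*u2) * u1" using r by algebra
  thus "z1 = ((z1*u1+z2*u2)/(u1^2+u2^2)) * u1" using N by (simp add: field_simps)
  have "z2 * (u1^2+u2^2) = (z1*u1+z2*u2) * u2" using r by algebra
  thus "z2 = ((z1*u1+z2*u2)/(u1^2+u2^2)) * u2" using N by (simp add: field_simps)
qed

lemma inj_param:
  fixes u1 u2 c l :: real
  assumes "u1 \<noteq> 0 \<or> u2 \<noteq> 0" "c*(-u2) + l*u1 = 0" "c*u1 + l*u2 = 0"
  shows "c = 0 \<and> l = 0"
proof -
  have "c * (u1^2+u2^2) = 0" using assms(2,3) by algebra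
  moreover have "l * (u1^2+u2^2) = 0" using assms(2,3) by algebra
  moreover have "u1^2+u2^2 \<noteq> 0" using assms(1) by (simp add: sum_power2_eq_zero_iff)
  ultimately show ?thesis by (metis mult_eq_0_iff)
qed


theorem mainTheorem1:
  fixes m :: "'n::finite \<Rightarrow> real" and q :: "(real^2)^'n"
  assumes "CARD('n) \<ge> 2"
    and "\<And>i. m i > 0"
    and "\<And>i j. i \<noteq> j \<Longrightarrow> q$i \<noteq> q$j"
  shows "dim (span {twist m q i j | i j. i \<noteq> j}) =
           (if collinear {q$i | i. True} then CARD('n) - 1 else 2 * CARD('n) - 3)"
proof -
  let ?S = "{twist m q i j | i j. i \<noteq> j}"
  define Orth where "Orth = {y. \<forall>x\<in>span ?S. orthogonal x y}"
  have "dim {y \<in> UNIV. \<forall>x\<in>span ?S. orthogonal x y} + dim (span ?S) = dim (UNIV :: ((real^2)^'n) set)"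
    by (rule dim_subspace_orthogonal_to_vectors) (auto simp: subspace_span)
  hence dimeq: "dim Orth + dim (span ?S) = 2 * CARD('n)" by (simp add: Orth_def mult.commute)
  have Ochar: "u \<in> Orth \<longleftrightarrow> (\<forall>i j. i \<noteq> j \<longrightarrow> tw_expr m q u i j = 0)" for u
  proof
    assume "u \<in> Orth"
    show "\<forall>i j. i \<noteq> j \<longrightarrow> tw_expr m q u i j = 0"
    proof (intro allI impI)
      fix i j :: 'n assume ij: "i \<noteq> j"
      have "twist m q i j \<in> span ?S" using ij by (intro span_base) blast
      hence "orthogonal (twist m q i j) u" using \<open>u \<in> Orth\<close> by (auto simp: Orth_def)
      thus "tw_expr m q u i j = 0" using inner_twist[OF ij, of u m q]
        by (simp add: orthogonal_def inner_commute)
    qed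
  next
    assume h: "\<forall>i j. i \<noteq> j \<longrightarrow> tw_expr m q u i j = 0"
    have "orthogonal u x" if "x \<in> span ?S" for x
    proof (rule orthogonal_to_span[OF that])
      fix y assume "y \<in> ?S"
      then obtain i j where ij: "i \<noteq> j" and y: "y = twist m q i j" by blast
      show "orthogonal u y" using h ij inner_twist[OF ij, of u m q] by (simp add: y orthogonal_def)
    qed
    thus "u \<in> Orth" by (auto simp: Orth_def orthogonal_commute)
  qed
  have mpos: "m k \<noteq> 0" for k using assms(2)[of k] by simp
  have dist: "i \<noteq> j \<Longrightarrow> q$i$1 \<noteq> q$j$1 \<or> q$i$2 \<noteq> q$j$2" for i j
    using assms(3) vec2_neq by blast
  obtain a b :: 'n where ab: "a \<noteq> b" using ex_two[OF assms(1)] by blast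
  have rel: "(u$i$1/m i - u$j$1/m j) * (q$i$2 - q$j$2) - (u$i$2/m i - u$j$2/m j) * (q$i$1 - q$j$1) = 0"
    if "u \<in> Orth" for u i j
  proof (cases "i = j")
    case True thus ?thesis by simp
  next
    case False
    have "tw_expr m q u i j = m i * m j * ((u$i$1/m i - u$j$1/m j) * (q$i$2 - q$j$2) - (u$i$2/m i - u$j$2/m j) * (q$i$1 - q$j$1))"
      unfolding tw_expr_def using mpos[of i] mpos[of j] by (simp add: field_simps)
    moreover have "tw_expr m q u i j = 0" using Ochar[of u] that False by blast
    ultimately show ?thesis using mpos[of i] mpos[of j] by simp
  qed
  show ?thesis
  proof (cases "collinear {q$i | i. True}")
    case True
    then obtain w :: "real^2" where w: "\<forall>x\<in>{q$i | i. True}. \<forall>y\<in>{q$i | i. True}. \<exists>c. x - y = c *\<^sub>R w"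
      unfolding collinear_def by blast
    have cw: "\<exists>c. q$i$1 - q$j$1 = c * w$1 \<and> q$i$2 - q$j$2 = c * w$2" for i j
    proof -
      obtain c where "q$i - q$j = c *\<^sub>R w" using w by blast
      hence "(q$i - q$j)$1 = (c *\<^sub>R w)$1" "(q$i - q$j)$2 = (c *\<^sub>R w)$2" by simp_all
      thus ?thesis by auto
    qed
    have w0: "w$1 \<noteq> 0 \<or> w$2 \<noteq> 0"
    proof (rule ccontr)
      assume "\<not> (w$1 \<noteq> 0 \<or> w$2 \<noteq> 0)"
      then obtain c where "q$a$1 - q$b$1 = 0" "q$a$2 - q$b$2 = 0" using cw[of a b] by auto
      thus False using dist[OF ab] by simp
    qed
    have N: "(w$1)^2 + (w$2)^2 \<noteq> 0" using w0 by (simp add: sum_power2_eq_zero_iff)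
    define g :: "real \<times> (real^'n) \<Rightarrow> (real^2)^'n" where
      "g p = (\<chi> k. m k *\<^sub>R vector [fst p * (- w$2) + snd p $ k * w$1, fst p * w$1 + snd p $ k * w$2])" for p
    have g1: "g p $ k $ 1 = m k * (fst p * (- w$2) + snd p $ k * w$1)" for p k by (simp add: g_def)
    have g2: "g p $ k $ 2 = m k * (fst p * w$1 + snd p $ k * w$2)" for p k by (simp add: g_def)
    have lin: "linear g"
      by (rule linearI) (simp_all add: vec_eq_iff forall_2 g1 g2 algebra_simps)
    have inj: "inj g"
      unfolding linear_injective_0[OF lin]
    proof (intro allI impI)
      fix p assume "g p = 0"
      hence z: "g p $ k $ 1 = 0" "g p $ k $ 2 = 0" for k by simp_all
      have "fst p = 0 \<and> snd p $ k = 0" for k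
        using inj_param[OF w0, of "fst p" "snd p $ k"] z[of k] mpos[of k] by (simp add: g1 g2)
      thus "p = 0" by (simp add: prod_eq_iff vec_eq_iff)
    qed
    have "Orth = range g"
    proof
      show "Orth \<subseteq> range g"
      proof
        fix u assume u: "u \<in> Orth"
        define A where "A k = u$k$1/m k" for k
        define B where "B k = u$k$2/m k" for k
        have r: "(A k - A a)*w$2 - (B k - B a)*w$1 = 0" for k
        proof (cases "k = a")
          case True thus ?thesis by simp
        next
          case False
          obtain c where c: "q$k$1 - q$a$1 = c * w$1" "q$k$2 - q$a$2 = c * w$2" using cw by blast
          have "c \<noteq> 0" using dist[OF False] c by auto
          moreover have "c * ((A k - A a)*w$2 - (B k - B a)*w$1) = 0"
            using rel[OF u, of k a] unfolding A_def B_def c by (simp add: algebra_simps)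
          ultimately show ?thesis by simp
        qed
        define p where "p = ((- A a * w$2 + B a * w$1)/((w$1)^2 + (w$2)^2),
            \<chi> k. (A k * w$1 + B k * w$2)/((w$1)^2 + (w$2)^2))"
        have "g p = u"
        proof (simp add: vec_eq_iff forall_2, intro allI conjI)
          fix k
          have "A k = fst p * (- w$2) + snd p $ k * w$1" unfolding p_def using coll_param(1)[OF N r[of k]] by simp
          thus "g p $ k $ 1 = u $ k $ 1" using mpos[of k] by (simp add: g1 A_def field_simps)
          have "B k = fst p * w$1 + snd p $ k * w$2" unfolding p_def using coll_param(2)[OF N r[of k]] by simp
          thus "g p $ k $ 2 = u $ k $ 2" using mpos[of k] by (simp add: g2 B_def field_simps)
        qed
        thus "u \<in> range g" by blast
      qed
    next
      show "range g \<subseteq> Orth"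
      proof
        fix u assume "u \<in> range g"
        then obtain p where u: "u = g p" by blast
        show "u \<in> Orth" unfolding Ochar
        proof (intro allI impI)
          fix i j :: 'n assume "i \<noteq> j"
          obtain c where c: "q$i$1 - q$j$1 = c * w$1" "q$i$2 - q$j$2 = c * w$2" using cw by blast
          show "tw_expr m q u i j = 0" unfolding tw_expr_def c u g1 g2 by algebra
        qed
      qed
    qed
    hence "dim Orth = dim (UNIV :: (real \<times> (real^'n)) set)"
      using eucl.dim_image_eq[OF lin, of UNIV] inj by (simp add: inj_on_def)
    hence "dim Orth = 1 + CARD('n)" by simp
    with dimeq True assms(1) show ?thesis by simp
  next
    case False
    have "\<exists>b c. (q$b$1 - q$a$1)*(q$c$2 - q$a$2) - (q$b$2 - q$a$2)*(q$c$1 - q$a$1) \<noteq> 0"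
    proof (rule ccontr)
      assume "\<not> ?thesis"
      hence h: "(q$b$1 - q$a$1)*(q$k$2 - q$a$2) - (q$b$2 - q$a$2)*(q$k$1 - q$a$1) = 0" for k by blast
      have N: "(q$b$1 - q$a$1)^2 + (q$b$2 - q$a$2)^2 \<noteq> 0"
        using dist[OF ab] by (auto simp: sum_power2_eq_zero_iff)
      define lam where "lam k = ((q$k$1 - q$a$1)*(q$b$1 - q$a$1) + (q$k$2 - q$a$2)*(q$b$2 - q$a$2))
          / ((q$b$1 - q$a$1)^2 + (q$b$2 - q$a$2)^2)" for k
      have pk: "q$k$1 - q$a$1 = lam k * (q$b$1 - q$a$1) \<and> q$k$2 - q$a$2 = lam k * (q$b$2 - q$a$2)" for k
        using par_param[OF N h[of k]] unfolding lam_def by simp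
      have "collinear {q$i | i. True}"
        unfolding collinear_def
      proof (intro exI[of _ "q$b - q$a"] ballI)
        fix x y assume "x \<in> {q$i | i. True}" "y \<in> {q$i | i. True}"
        then obtain i j where x: "x = q$i" and y: "y = q$j" by blast
        have "x - y = (lam i - lam j) *\<^sub>R (q$b - q$a)"
          unfolding x y using pk[of i] pk[of j] by (simp add: vec_eq_iff forall_2 algebra_simps)
        thus "\<exists>c. x - y = c *\<^sub>R (q$b - q$a)" by blast
      qed
      with False show False by simp
    qed
    then obtain b0 c0 where nc: "(q$b0$1 - q$a$1)*(q$c0$2 - q$a$2) - (q$b0$2 - q$a$2)*(q$c0$1 - q$a$1) \<noteq> 0"
      by blast
    define f :: "(real^2) \<times> real \<Rightarrow> (real^2)^'n" where
      "f p = (\<chi> k. m k *\<^sub>R (fst p - snd p *\<^sub>R q$k))" for p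
    have f1: "f p $ k $ 1 = m k * (fst p $ 1 - snd p * q$k$1)" for p k by (simp add: f_def)
    have f2: "f p $ k $ 2 = m k * (fst p $ 2 - snd p * q$k$2)" for p k by (simp add: f_def)
    have lin: "linear f"
      by (rule linearI) (simp_all add: vec_eq_iff forall_2 f1 f2 algebra_simps)
    have inj: "inj f"
      unfolding linear_injective_0[OF lin]
    proof (intro allI impI)
      fix p assume "f p = 0"
      hence z0: "f p $ k $ d = 0" for k d by simp
      have z: "fst p $ d = snd p * q$k$d" if "d = 1 \<or> d = 2" for k d
        using mpos[of k] that z0[of k 1] z0[of k 2] by (auto simp: f1 f2)
      have za1: "fst p $ 1 = snd p * q$a$1" "fst p $ 1 = snd p * q$b$1"
        "fst p $ 2 = snd p * q$a$2" "fst p $ 2 = snd p * q$b$2" using z by simp_all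
      have "snd p * (q$a$1 - q$b$1) = 0" "snd p * (q$a$2 - q$b$2) = 0"
        unfolding right_diff_distrib using za1 by linarith+
      hence s0: "snd p = 0" using dist[OF ab] by auto
      hence "fst p $ d = 0" for d using z[of d a] exhaust_2[of d] by auto
      thus "p = 0" using s0 by (simp add: prod_eq_iff vec_eq_iff)
    qed
    have "Orth = range f"
    proof
      show "Orth \<subseteq> range f"
      proof
        fix u assume u: "u \<in> Orth"
        obtain s1 s2 w where sw: "\<forall>k. u$k$1/m k = s1 - w * q$k$1 \<and> u$k$2/m k = s2 - w * q$k$2"
          using rigid[of "\<lambda>k. u$k$1/m k" "\<lambda>k. q$k$2" "\<lambda>k. u$k$2/m k" "\<lambda>k. q$k$1", OF rel[OF u] dist nc]
          by blast
        have "f (vector [s1, s2], w) = u"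
        proof (simp add: vec_eq_iff forall_2, intro allI conjI)
          fix k
          have e1: "u$k$1 = m k * (s1 - w * q$k$1)" "u$k$2 = m k * (s2 - w * q$k$2)"
            using sw[rule_format, of k] mpos[of k] by (simp_all add: field_simps)
          show "f (vector [s1, s2], w) $ k $ 1 = u $ k $ 1" using e1 by (simp add: f1)
          show "f (vector [s1, s2], w) $ k $ 2 = u $ k $ 2" using e1 by (simp add: f2)
        qed
        thus "u \<in> range f" by (metis rangeI)
      qed
    next
      show "range f \<subseteq> Orth"
      proof
        fix u assume "u \<in> range f"
        then obtain p where u: "u = f p" by blast
        show "u \<in> Orth" unfolding Ochar
        proof (intro allI impI)
          fix i j :: 'n assume "i \<noteq> j"
          show "tw_expr m q u i j = 0" unfolding tw_expr_def u f1 f2 by algebra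
        qed
      qed
    qed
    hence "dim Orth = dim (UNIV :: ((real^2) \<times> real) set)"
      using eucl.dim_image_eq[OF lin, of UNIV] inj by (simp add: inj_on_def)
    hence "dim Orth = 3" by simp
    with dimeq False show ?thesis by simp
  qed
qed

end
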